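(* Let $T$ be a finite tree, let $\mathcal{F}$ be a finite family of subtrees of $T$, and let $G$ be the disjointness graph of $\mathcal{F}$ (vertices are the members of $\mathcal{F}$, two adjacent iff they are vertex-disjoint); equivalently, $G$ is the complement of a chordal graph. Then $c(G)\le p(G)\le 2$.
   Context: A comparability graph is a graph admitting a transitive orientation. $p(G)$ is the minimum number $m$ such that $E(G)$ is the union of the edge sets of $m$ pairwise edge-disjoint comparability subgraphs of $G$; $c(G)$ is the minimum number of comparability subgraphs of $G$ (not necessarily edge-disjoint) whose edge sets cover $E(G)$. *)

theory Defs
  imports Main
begin

definition simple_graph :: "'a set \<Rightarrow> 'a set set \<Rightarrow> bool" where
  "simple_graph V E \<longleftrightarrow> (\<forall>e\<in>E. e \<subseteq> V \<and> card e = 2)"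

definition is_tree :: "'a set \<Rightarrow> 'a set set \<Rightarrow> bool" where
  "is_tree V E \<longleftrightarrow> finite V \<and> V \<noteq> {} \<and> simple_graph V E \<and>
     (\<forall>u\<in>V. \<forall>v\<in>V. (\<lambda>x y. {x, y} \<in> E)\<^sup>*\<^sup>* u v) \<and>
     \<not> (\<exists>cs. length cs \<ge> 3 \<and> distinct cs \<and>
            (\<forall>i<length cs. {cs ! i, cs ! ((i + 1) mod length cs)} \<in> E))"

definition is_subtree :: "'a set \<Rightarrow> 'a set set \<Rightarrow> 'a set \<Rightarrow> bool" where
  "is_subtree V E S \<longleftrightarrow> S \<subseteq> V \<and> S \<noteq> {} \<and>
     (\<forall>u\<in>S. \<forall>v\<in>S. (\<lambda>x y. {x, y} \<in> E \<and> x \<in> S \<and> y \<in> S)\<^sup>*\<^sup>* u v)"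

definition disjointness_edges :: "'i set \<Rightarrow> ('i \<Rightarrow> 'a set) \<Rightarrow> 'i set set" where
  "disjointness_edges I S = {{i, j} | i j. i \<in> I \<and> j \<in> I \<and> i \<noteq> j \<and> S i \<inter> S j = {}}"

definition comparability_graph :: "'a set \<Rightarrow> 'a set set \<Rightarrow> bool" where
  "comparability_graph V E \<longleftrightarrow> (\<exists>R :: ('a \<times> 'a) set.
     R \<subseteq> V \<times> V \<and>
     (\<forall>u v. (u, v) \<in> R \<longrightarrow> {u, v} \<in> E) \<and>
     (\<forall>u v. {u, v} \<in> E \<longrightarrow> (u, v) \<in> R \<or> (v, u) \<in> R) \<and>
     (\<forall>u v. (u, v) \<in> R \<longrightarrow> (v, u) \<notin> R) \<and>
     trans R)"

definition comp_cover_number :: "'a set \<Rightarrow> 'a set set \<Rightarrow> nat" where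
  "comp_cover_number V E = (LEAST m. \<exists>F :: nat \<Rightarrow> 'a set set.
     (\<forall>i<m. F i \<subseteq> E \<and> comparability_graph V (F i)) \<and> (\<Union>i<m. F i) = E)"

definition comp_partition_number :: "'a set \<Rightarrow> 'a set set \<Rightarrow> nat" where
  "comp_partition_number V E = (LEAST m. \<exists>F :: nat \<Rightarrow> 'a set set.
     (\<forall>i<m. F i \<subseteq> E \<and> comparability_graph V (F i)) \<and> (\<Union>i<m. F i) = E \<and>
     (\<forall>i<m. \<forall>j<m. i \<noteq> j \<longrightarrow> F i \<inter> F j = {}))"

end

theory Submission imports Defs "HOL-Library.List_Lexorder" begin

locale rtree =
  fixes V :: "'a set" and E :: "'a set set" and r :: 'a and p :: "'a \<Rightarrow> 'a"
  assumes sg: "simple_graph V E"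
  and acyc: "\<not> (\<exists>cs. length cs \<ge> 3 \<and> distinct cs \<and>
            (\<forall>i<length cs. {cs ! i, cs ! ((i + 1) mod length cs)} \<in> E))"
  and rV: "r \<in> V" and pr: "p r = r" and pV: "x \<in> V \<Longrightarrow> p x \<in> V"
  and pE: "x \<in> V \<Longrightarrow> x \<noteq> r \<Longrightarrow> {x, p x} \<in> E"
  and reach: "x \<in> V \<Longrightarrow> \<exists>n. (p^^n) x = r"
begin

lemma funpow_r[simp]: "(p^^n) r = r"
  by (induct n) (auto simp: pr)

lemma funpow_V: "x \<in> V \<Longrightarrow> (p^^n) x \<in> V"
  by (induct n) (auto simp: pV)

lemma fa: "(p^^(m+n)) x = (p^^m) ((p^^n) x)" by (simp add: funpow_add)
lemma fle: "n \<le> m \<Longrightarrow> (p^^m) x = (p^^(m-n)) ((p^^n) x)" using fa[of "m-n" n] by simp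

lemma reach_ge: "(p^^n) x = r \<Longrightarrow> n \<le> m \<Longrightarrow> (p^^m) x = r"
proof -
  assume a: "(p^^n) x = r" "n \<le> m"
  have "(p^^m) x = (p^^(m-n)) ((p^^n) x)"
    using a(2) fle by blast
  thus ?thesis using a by simp
qed

lemma shrink: assumes "(p^^c) w = (p^^c') w" "c < c'" "c' \<le> L"
  shows "(p^^L) w = (p^^(L - (c' - c))) w"
proof -
  have "(p^^L) w = (p^^(L - c')) ((p^^c') w)"
    using assms fle by simp
  also have "\<dots> = (p^^(L - c')) ((p^^c) w)" using assms by simp
  also have "\<dots> = (p^^(L - c' + c)) w" by (simp add: fa)
  finally show ?thesis using assms by simp
qed

lemma no_loop: assumes "x \<in> V" "(p^^m) x = x" "m > 0" shows "x = r"
proof -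
  obtain n where n: "(p^^n) x = r" using reach assms(1) by blast
  have k: "(p^^(m*k)) x = x" for k
  proof (induct k)
    case (Suc k)
    have "(p^^(m*Suc k)) x = (p^^(m*k)) ((p^^m) x)"
      using fa[of "m*k" m] by (simp add: add.commute)
    thus ?case using Suc assms(2) by simp
  qed simp
  have "n \<le> m*n" using assms(3) by simp
  then have "(p^^(m*n)) x = r" using reach_ge n by blast
  thus ?thesis using k by simp
qed

definition anc :: "'a \<Rightarrow> 'a \<Rightarrow> bool" where
  "anc a b \<longleftrightarrow> (\<exists>i. a = (p^^i) b)"

lemma anc_refl[simp]: "anc a a"
  unfolding anc_def by (rule exI[of _ 0]) simp

lemma anc_trans: "anc a b \<Longrightarrow> anc b c \<Longrightarrow> anc a c"
proof -
  assume "anc a b" "anc b c"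
  then obtain i j where "a = (p^^i) b" "b = (p^^j) c" unfolding anc_def by blast
  then have "a = (p^^(i+j)) c" by (simp add: fa)
  thus ?thesis unfolding anc_def by blast
qed

lemma anc_V: "anc a b \<Longrightarrow> b \<in> V \<Longrightarrow> a \<in> V"
  unfolding anc_def using funpow_V by blast

lemma anc_p: "anc (p b) b"
  unfolding anc_def by (rule exI[of _ 1]) simp

lemma anc_antisym: assumes "b \<in> V" "anc a b" "anc b a" shows "a = b"
proof -
  obtain i j where ij: "a = (p^^i) b" "b = (p^^j) a" using assms unfolding anc_def by blast
  have "b = (p^^j) ((p^^i) b)" using ij(2) unfolding ij(1) .
  then have "b = (p^^(j+i)) b" by (simp only: fa)
  show ?thesis
  proof (cases "j + i = 0")
    case True thus ?thesis using ij(1) by simp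
  next
    case False
    then have "j + i > 0" by simp
    from no_loop[OF assms(1) _ this] \<open>b = (p^^(j+i)) b\<close> have "b = r" by simp
    thus ?thesis using ij(1) by simp
  qed
qed

lemma anc_chain: assumes "anc a x" "anc b x" shows "anc a b \<or> anc b a"
proof -
  obtain i j where ij: "a = (p^^i) x" "b = (p^^j) x" using assms unfolding anc_def by blast
  show ?thesis
  proof (cases "i \<le> j")
    case True
    have "b = (p^^(j-i)) a" unfolding ij using fle[OF True, of x] .
    thus ?thesis unfolding anc_def by blast
  next
    case False
    then have ji: "j \<le> i" by simp
    have "a = (p^^(i-j)) b" unfolding ij using fle[OF ji, of x] .
    thus ?thesis unfolding anc_def by blast
  qed
qed

lemma anc_cases: "anc a (b::'a) \<Longrightarrow> a = b \<or> anc a (p b)"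
proof -
  assume "anc a b"
  then obtain i where i: "a = (p^^i) b" unfolding anc_def by blast
  show ?thesis
  proof (cases i)
    case (Suc j) then have "a = (p^^j) (p b)" using i by (simp add: funpow_swap1)
    thus ?thesis unfolding anc_def by blast
  qed (use i in simp)
qed

lemma pE': "x \<in> V \<Longrightarrow> x \<noteq> r \<Longrightarrow> {p x, x} \<in> E"
  using pE by (simp add: insert_commute)

lemma edge_parent:
  assumes uV: "u \<in> V" and vV: "v \<in> V" and e: "{u, v} \<in> E"
  shows "u = p v \<or> v = p u"
proof (rule ccontr)
  assume nc: "\<not> (u = p v \<or> v = p u)"
  have "card {u, v} = 2" using sg e unfolding simple_graph_def by blast
  then have uv: "u \<noteq> v" by auto
  obtain n1 n2 where "(p^^n1) u = r" "(p^^n2) v = r" using reach uV vV by blast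
  then have "(\<lambda>(k,l). (p^^k) u = (p^^l) v) (n1, n2)" by simp
  from ex_has_least_nat[of "\<lambda>(k,l). (p^^k) u = (p^^l) v", OF this, of "\<lambda>(k,l). k + l"]
  obtain k l where kl: "(p^^k) u = (p^^l) v"
    and mn: "\<And>k' l'. (p^^k') u = (p^^l') v \<Longrightarrow> k + l \<le> k' + l'" by auto
  have nru: "(p^^i) u \<noteq> r" if "i < k" for i
  proof
    assume "(p^^i) u = r"
    then have "(p^^k) u = r" using reach_ge that by simp
    then have "(p^^i) u = (p^^l) v" using kl \<open>(p^^i) u = r\<close> by simp
    thus False using mn[of i l] that by simp
  qed
  have nrv: "(p^^j) v \<noteq> r" if "j < l" for j
  proof
    assume "(p^^j) v = r"
    then have "(p^^l) v = r" using reach_ge that by simp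
    then have "(p^^k) u = (p^^j) v" using kl \<open>(p^^j) v = r\<close> by simp
    thus False using mn[of k j] that by simp
  qed
  define g where "g i = (if i \<le> k then (p^^i) u else (p^^(k+l-i)) v)" for i
  define n where "n = Suc k + l"
  define cs where "cs = map g [0..<n]"
  have len: "length cs = n" unfolding cs_def by simp
  have k2: "k + l \<ge> 2"
  proof (rule ccontr)
    assume "\<not> k + l \<ge> 2"
    then consider "k = 0" "l = 0" | "k = 1" "l = 0" | "k = 0" "l = 1" by linarith
    thus False using kl uv nc by cases auto
  qed
  have "inj_on g {0..<n}"
  proof (rule inj_onI)
    fix i i' assume ii: "i \<in> {0..<n}" "i' \<in> {0..<n}" "g i = g i'"
    show "i = i'"
    proof (rule ccontr)
      assume "i \<noteq> i'"
      have gen: False if "a < b" "b < n" "g a = g b" for a b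
      proof (cases "b \<le> k")
        case True
        have "(p^^a) u = (p^^b) u" using that True unfolding g_def by simp
        from shrink[OF this that(1) True]
        have "(p^^(k - (b - a))) u = (p^^l) v" using kl by simp
        thus False using mn[of "k - (b-a)" l] that True by linarith
      next
        case False
        show False
        proof (cases "a \<le> k")
          case True
          have "(p^^a) u = (p^^(k+l-b)) v" using that True False unfolding g_def by simp
          thus False using mn[of a "k+l-b"] that True False unfolding n_def by linarith
        next
          case False2: False
          have e1: "(p^^(k+l-b)) v = (p^^(k+l-a)) v" using that False False2 unfolding g_def by simp
          have "(p^^l) v = (p^^(l - ((k+l-a) - (k+l-b)))) v"
            using shrink[OF e1] that False False2 unfolding n_def by simp
          thus False using mn[of k "l - ((k+l-a) - (k+l-b))"] kl that False False2 unfolding n_def by simp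
        qed
      qed
      show False
      proof (cases "i < i'")
        case True thus False using gen[of i i'] ii by auto
      next
        case False thus False using gen[of i' i] ii \<open>i \<noteq> i'\<close> by auto
      qed
    qed
  qed
  then have dist: "distinct cs" unfolding cs_def by (simp add: distinct_map)
  have E1: "{(p^^j) w, (p^^Suc j) w} \<in> E" if "w \<in> V" "(p^^j) w \<noteq> r" for w j
    using pE[OF funpow_V[OF that(1)] that(2)] by simp
  have E2: "{(p^^Suc j) w, (p^^j) w} \<in> E" if "w \<in> V" "(p^^j) w \<noteq> r" for w j
    using E1[OF that] by (simp add: insert_commute)
  have edges: "\<forall>i<length cs. {cs ! i, cs ! ((i + 1) mod length cs)} \<in> E"
  proof (intro allI impI)
    fix i assume i: "i < length cs"
    then have csi: "cs ! i = g i" unfolding cs_def by simp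
    show "{cs ! i, cs ! ((i + 1) mod length cs)} \<in> E"
    proof (cases "i + 1 < n")
      case True
      then have m: "cs ! ((i + 1) mod length cs) = g (Suc i)" unfolding len cs_def by simp
      consider "i < k" | "i = k" | "k < i" by linarith
      then show ?thesis
      proof cases
        case 1
        then show ?thesis unfolding csi m g_def using E1[OF uV nru[OF 1]] by simp
      next
        case 2
        then have l0: "l = Suc (l - 1)" using True unfolding n_def by simp
        have "g i = (p^^Suc (l-1)) v" unfolding g_def using 2 kl l0 by simp
        moreover have "g (Suc i) = (p^^(l-1)) v" unfolding g_def using 2 by simp
        moreover have "(p^^(l-1)) v \<noteq> r" using nrv l0 by simp
        ultimately show ?thesis unfolding csi m using E2[OF vV] by simp
      next
        case 3
        have eq: "k + l - i = Suc (k + l - Suc i)" using True unfolding n_def by simp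
        have "g i = (p^^Suc (k + l - Suc i)) v" unfolding g_def using 3 eq by simp
        moreover have "g (Suc i) = (p^^(k + l - Suc i)) v" unfolding g_def using 3 by simp
        moreover have "(p^^(k + l - Suc i)) v \<noteq> r" using nrv 3 True unfolding n_def by simp
        ultimately show ?thesis unfolding csi m using E2[OF vV] by simp
      qed
    next
      case False
      then have ii: "i = k + l" using i unfolding len n_def by auto
      then have "(i + 1) mod length cs = 0" unfolding len n_def by simp
      moreover have "cs ! 0 = g 0" unfolding cs_def n_def by (simp del: upt_Suc)
      ultimately have m: "cs ! ((i + 1) mod length cs) = g 0" by simp
      have "g i = v" unfolding g_def ii using kl by auto
      moreover have "g 0 = u" unfolding g_def by simp
      ultimately show ?thesis unfolding csi m using e by (simp add: insert_commute)
    qed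
  qed
  show False using acyc dist edges len k2 unfolding n_def by auto
qed


lemma walk_lemma:
  assumes SV: "S \<subseteq> V" and xS: "x \<in> S"
  and w: "(\<lambda>a b. {a,b} \<in> E \<and> a \<in> S \<and> b \<in> S)\<^sup>*\<^sup>* x y"
  shows "\<exists>m\<in>S. anc m x \<and> anc m y \<and> (\<forall>z. anc m z \<and> anc z x \<longrightarrow> z \<in> S)
           \<and> (\<forall>z. anc m z \<and> anc z y \<longrightarrow> z \<in> S)"
  using w
proof (induction rule: rtranclp_induct)
  case base
  have "z \<in> S" if "anc x z \<and> anc z x" for z
  proof -
    have "z = x" using anc_antisym[of x z] SV xS that by auto
    thus ?thesis using xS by simp
  qed
  thus ?case using xS anc_refl by blast
next
  case (step y y')
  from step.IH obtain m where m: "m \<in> S" "anc m x" "anc m y"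
    "\<forall>z. anc m z \<and> anc z x \<longrightarrow> z \<in> S" "\<forall>z. anc m z \<and> anc z y \<longrightarrow> z \<in> S" by blast
  have yS: "y \<in> S" "y' \<in> S" "{y,y'} \<in> E" using step(2) by auto
  have yV: "y \<in> V" "y' \<in> V" using yS SV by auto
  from edge_parent[OF yV yS(3)] consider "y = p y'" | "y' = p y" by blast
  then show ?case
  proof cases
    case 1
    have a: "anc m y'" using anc_trans[OF m(3), of y'] anc_p[of y'] unfolding 1 by blast
    have "z \<in> S" if "anc m z \<and> anc z y'" for z
    proof -
      from anc_cases[of z y'] that consider "z = y'" | "anc z (p y')" by blast
      then show ?thesis
      proof cases
        case 1 thus ?thesis using yS(2) by simp
      next
        case 2 thus ?thesis using m(5) that unfolding \<open>y = p y'\<close> by blast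
      qed
    qed
    thus ?thesis using m a by blast
  next
    case 2
    from anc_cases[of m y] m(3) have "m = y \<or> anc m y'" unfolding 2 by blast
    then show ?thesis
    proof
      assume c2: "anc m y'"
      have "z \<in> S" if "anc m z \<and> anc z y'" for z
      proof -
        have "anc z y" using anc_trans[of z y' y] anc_p[of y] that unfolding 2 by blast
        thus ?thesis using m(5) that by blast
      qed
      thus ?thesis using m c2 by blast
    next
      assume my: "m = y"
      have a1: "anc y' x" using anc_trans[OF _ m(2), of y'] anc_p[of y] unfolding my 2 by blast
      have b1: "z \<in> S" if "anc y' z \<and> anc z x" for z
      proof -
        have "anc y x" using m(2) my by simp
        from anc_chain[of z x y] that this consider "anc z y" | "anc y z" by blast
        then show ?thesis
        proof cases
          case c1a: 1
          from anc_cases[OF c1a] show ?thesis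
          proof
            assume "z = y" thus ?thesis using yS by simp
          next
            assume "anc z (p y)"
            then have "anc z y'" unfolding 2 .
            then have "z = y'" using anc_antisym[of y' z] that yV(2) by blast
            thus ?thesis using yS by simp
          qed
        next
          case c2: 2
          thus ?thesis using m(4) my that by blast
        qed
      qed
      have b2: "z \<in> S" if "anc y' z \<and> anc z y'" for z
      proof -
        have "z = y'" using anc_antisym[of y' z] that yV(2) by blast
        thus ?thesis using yS by simp
      qed
      show ?thesis using a1 b1 b2 yS(2) anc_refl by blast
    qed
  qed
qed

definition h :: "'a \<Rightarrow> nat" where "h x = (LEAST n. (p^^n) x = r)"

lemma h_prop: "x \<in> V \<Longrightarrow> (p^^(h x)) x = r"
  unfolding h_def using reach by (rule LeastI_ex) 

lemma h_le: "(p^^n) x = r \<Longrightarrow> h x \<le> n"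
  unfolding h_def by (rule Least_le)

lemma h_r: "h r = 0" using h_le[of 0 r] by simp

lemma h_anc_less: assumes tV: "t \<in> V" and a: "anc m t" and ne: "m \<noteq> t" shows "h m < h t"
proof -
  obtain j where j: "m = (p^^j) t" using a unfolding anc_def by blast
  have tr: "t \<noteq> r" using j ne by auto
  have H: "(p^^(h t)) t = r" using h_prop tV by simp
  have H0: "h t > 0" using H tr by (cases "h t") auto
  show ?thesis
  proof (cases "j \<le> h t")
    case True
    have j0: "j > 0" using j ne by (cases j) auto
    have "(p^^(h t - j)) m = r" using fle[OF True, of t] H j by simp
    then have "h m \<le> h t - j" by (rule h_le)
    thus ?thesis using j0 H0 by simp
  next
    case False
    then have "m = r" using reach_ge[OF H] j by simp
    thus ?thesis using h_r H0 by simp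
  qed
qed

lemma top_lemma:
  assumes SV: "S \<subseteq> V" and ne: "S \<noteq> {}"
  and conn: "\<forall>u\<in>S. \<forall>v\<in>S. (\<lambda>x y. {x,y} \<in> E \<and> x \<in> S \<and> y \<in> S)\<^sup>*\<^sup>* u v"
  shows "\<exists>t\<in>S. (\<forall>x\<in>S. anc t x) \<and> (\<forall>w x. x \<in> S \<longrightarrow> anc t w \<longrightarrow> anc w x \<longrightarrow> w \<in> S)"
proof -
  obtain x0 where "x0 \<in> S" using ne by blast
  from ex_has_least_nat[of "\<lambda>x. x \<in> S", OF this, of h]
  obtain t where t: "t \<in> S" "\<forall>y. y \<in> S \<longrightarrow> h t \<le> h y" by blast
  have key: "anc t x \<and> (\<forall>w. anc t w \<and> anc w x \<longrightarrow> w \<in> S)" if xS: "x \<in> S" for x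
  proof -
    from walk_lemma[OF SV t(1) conn[rule_format, OF t(1) xS]]
    obtain m where m: "m \<in> S" "anc m t" "anc m x" "\<forall>z. anc m z \<and> anc z x \<longrightarrow> z \<in> S" by blast
    have "m = t"
    proof (rule ccontr)
      assume "m \<noteq> t"
      then have "h m < h t" using h_anc_less[OF _ m(2)] t(1) SV by auto
      thus False using t(2) m(1) by fastforce
    qed
    thus ?thesis using m by blast
  qed
  show ?thesis using key t(1) by blast
qed

definition P :: "'a \<Rightarrow> 'a list" where
  "P x = rev (map (\<lambda>i. (p^^i) x) [0..<Suc (h x)])"

lemma h_p: assumes xV: "x \<in> V" and xr: "x \<noteq> r" shows "h x = Suc (h (p x))"
proof -
  have H: "(p^^(h x)) x = r" using h_prop xV by simp
  then obtain H' where H': "h x = Suc H'" using xr by (cases "h x") auto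
  have "(p^^H') (p x) = r" using H H' by (simp add: funpow_swap1)
  then have "h (p x) \<le> H'" by (rule h_le)
  moreover have "(p^^(Suc (h (p x)))) x = r" using h_prop[OF pV[OF xV]] by (simp add: funpow_swap1)
  then have "h x \<le> Suc (h (p x))" by (rule h_le)
  ultimately show ?thesis using H' by simp
qed

lemma P_p: assumes xV: "x \<in> V" and xr: "x \<noteq> r" shows "P x = P (p x) @ [x]"
proof -
  have "P x = rev (map (\<lambda>i. (p^^i) x) [0..<Suc (Suc (h (p x)))])"
    unfolding P_def h_p[OF xV xr] ..
  also have "\<dots> = rev (x # map (\<lambda>i. (p^^(Suc i)) x) [0..<Suc (h (p x))])"
    by (simp only: map_upt_Suc funpow_0)
  also have "\<dots> = P (p x) @ [x]" unfolding P_def by (simp add: funpow_swap1)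
  finally show ?thesis .
qed

lemma P_set: "a \<in> set (P b) \<Longrightarrow> anc a b"
  unfolding P_def anc_def by auto

lemma P_self: "a \<in> set (P a)"
proof -
  have "a \<in> (\<lambda>i. (p^^i) a) ` {0..<Suc (h a)}" by (rule image_eqI[of _ _ 0]) auto
  thus ?thesis unfolding P_def by (simp del: upt_Suc)
qed

lemma P_V: "x \<in> V \<Longrightarrow> set (P x) \<subseteq> V"
  unfolding P_def using funpow_V by auto

lemma P_anc: assumes "b \<in> V" "anc a b" shows "\<exists>ys. P b = P a @ ys"
proof -
  obtain i where "a = (p^^i) b" using assms unfolding anc_def by blast
  then show ?thesis using assms(1)
  proof (induction i arbitrary: b)
    case 0 thus ?case by simp
  next
    case (Suc i)
    have a: "a = (p^^i) (p b)" using Suc.prems by (simp add: funpow_swap1)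
    from Suc.IH[OF a pV[OF Suc.prems(2)]] obtain ys where ys: "P (p b) = P a @ ys" by blast
    show ?case
    proof (cases "b = r")
      case True thus ?thesis using ys pr by simp
    next
      case False thus ?thesis using ys P_p[OF Suc.prems(2) False] by simp
    qed
  qed
qed

end

lemma lex_prefix_le: "(xs::nat list) \<le> xs @ ys"
  by (induct xs) auto

lemma lex_mid: "(xs::nat list) < ys \<Longrightarrow> ys < xs @ zs \<Longrightarrow> \<exists>ws. ys = xs @ ws"
proof (induction xs arbitrary: ys)
  case Nil thus ?case by simp
next
  case (Cons x xs)
  then obtain y ys' where ys: "ys = y # ys'" by (cases ys) auto
  show ?case using Cons.prems Cons.IH[of ys'] unfolding ys by auto
qed


locale rtree_f = rtree +
  fixes f :: "'a \<Rightarrow> nat"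
  assumes finj: "inj_on f V"
begin

definition L :: "'a \<Rightarrow> nat list" where "L x = map f (P x)"

lemma L_prefix_anc: assumes aV: "a \<in> V" and bV: "b \<in> V" and eq: "L b = L a @ ys"
  shows "anc a b"
proof -
  let ?n = "length (P a)"
  have "take ?n (L b) = L a" using eq unfolding L_def by simp
  then have m: "map f (take ?n (P b)) = map f (P a)" unfolding L_def by (simp add: take_map)
  have "set (take ?n (P b)) \<subseteq> V" using P_V[OF bV] set_take_subset[of ?n "P b"] by (rule order_trans[rotated])
  then have "set (take ?n (P b)) \<union> set (P a) \<subseteq> V" using P_V[OF aV] by (rule Un_least)
  then have "inj_on f (set (take ?n (P b)) \<union> set (P a))" by (rule inj_on_subset[OF finj])
  then have "take ?n (P b) = P a" using m by (simp add: inj_on_map_eq_map)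
  then have "set (P a) \<subseteq> set (P b)" using set_take_subset[of ?n "P b"] by simp
  then have "a \<in> set (P b)" using P_self[of a] by (rule subsetD)
  thus ?thesis by (rule P_set)
qed

lemma L_anc: assumes "b \<in> V" "anc a b" shows "\<exists>ys. L b = L a @ ys"
proof -
  obtain ys where "P b = P a @ ys" using P_anc[OF assms] by blast
  then have "L b = L a @ map f ys" unfolding L_def by simp
  thus ?thesis by blast
qed

lemma L_le: assumes "b \<in> V" "anc a b" shows "L a \<le> L b"
proof -
  obtain ys where "L b = L a @ ys" using L_anc[OF assms] by blast
  thus ?thesis using lex_prefix_le[of "L a" ys] by simp
qed

lemma L_inj: assumes "a \<in> V" "b \<in> V" "L a = L b" shows "a = b"
proof -
  have "anc a b" using L_prefix_anc[of a b "[]"] assms by simp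
  moreover have "anc b a" using L_prefix_anc[of b a "[]"] assms by simp
  ultimately show ?thesis using anc_antisym assms by blast
qed

lemma L_dfs: assumes "a \<in> V" "b \<in> V" "c \<in> V" "anc a c" "L a < L b" "L b < L c"
  shows "anc a b"
proof -
  obtain ys where ys: "L c = L a @ ys" using L_anc assms by blast
  have "\<exists>ws. L b = L a @ ws" using lex_mid[of "L a" "L b" ys] assms(5,6) unfolding ys by blast
  then obtain ws where "L b = L a @ ws" by blast
  thus ?thesis using L_prefix_anc assms by blast
qed

lemma main:
  assumes sub: "\<forall>i\<in>I. is_subtree V E (S i)"
  shows "\<exists>F0 F1. F0 \<subseteq> disjointness_edges I S \<and> F1 \<subseteq> disjointness_edges I S
     \<and> comparability_graph I F0 \<and> comparability_graph I F1
     \<and> F0 \<union> F1 = disjointness_edges I S \<and> F0 \<inter> F1 = {}"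
proof -
  have topex: "\<exists>t. t \<in> S i \<and> (\<forall>x\<in>S i. anc t x) \<and> (\<forall>w x. x \<in> S i \<longrightarrow> anc t w \<longrightarrow> anc w x \<longrightarrow> w \<in> S i)"
    if "i \<in> I" for i
    using top_lemma[of "S i"] sub that unfolding is_subtree_def by blast
  define T where "T i = (SOME t. t \<in> S i \<and> (\<forall>x\<in>S i. anc t x) \<and> (\<forall>w x. x \<in> S i \<longrightarrow> anc t w \<longrightarrow> anc w x \<longrightarrow> w \<in> S i))" for i
  have T: "T i \<in> S i \<and> (\<forall>x\<in>S i. anc (T i) x) \<and> (\<forall>w x. x \<in> S i \<longrightarrow> anc (T i) w \<longrightarrow> anc w x \<longrightarrow> w \<in> S i)"
    if "i \<in> I" for i
    unfolding T_def using someI_ex[OF topex[OF that]] .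
  have SV: "S i \<subseteq> V" if "i \<in> I" for i using sub that unfolding is_subtree_def by blast
  have TS: "T i \<in> S i" if "i \<in> I" for i using T that by blast
  have TV: "T i \<in> V" if "i \<in> I" for i using TS SV that by blast
  have Tanc: "anc (T i) x" if "i \<in> I" "x \<in> S i" for i x using T that by blast
  have Tconv: "w \<in> S i" if "i \<in> I" "x \<in> S i" "anc (T i) w" "anc w x" for i w x
    using T that by blast
  define cmp where "cmp i j \<longleftrightarrow> anc (T i) (T j) \<or> anc (T j) (T i)" for i j
  define D where "D = disjointness_edges I S"
  define F0 where "F0 = {{i, j} | i j. i \<in> I \<and> j \<in> I \<and> i \<noteq> j \<and> S i \<inter> S j = {} \<and> cmp i j}"
  define F1 where "F1 = {{i, j} | i j. i \<in> I \<and> j \<in> I \<and> i \<noteq> j \<and> S i \<inter> S j = {} \<and> \<not> cmp i j}"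
  have cmp_sym: "cmp i j = cmp j i" for i j unfolding cmp_def by blast
  have U: "F0 \<union> F1 = D" unfolding F0_def F1_def D_def disjointness_edges_def by blast
  have Dj: "F0 \<inter> F1 = {}"
  proof (rule ccontr)
    assume "F0 \<inter> F1 \<noteq> {}"
    then obtain i j i' j' where "{i,j} = {i',j'}" "cmp i j" "\<not> cmp i' j'"
      unfolding F0_def F1_def by blast
    thus False using cmp_sym by (auto simp: doubleton_eq_iff)
  qed
  have incmp_disj: "S i \<inter> S j = {}" if "i \<in> I" "j \<in> I" "\<not> cmp i j" for i j
  proof (rule ccontr)
    assume "S i \<inter> S j \<noteq> {}"
    then obtain x where "x \<in> S i" "x \<in> S j" by blast
    then have "anc (T i) x" "anc (T j) x" using Tanc that by auto
    thus False using anc_chain that(3) unfolding cmp_def by blast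
  qed
  define R0 where "R0 = {(i, j). i \<in> I \<and> j \<in> I \<and> S i \<inter> S j = {} \<and> anc (T i) (T j)}"
  define R1 where "R1 = {(i, j). i \<in> I \<and> j \<in> I \<and> \<not> cmp i j \<and> L (T i) < L (T j)}"
  have R0D: "(u, v) \<in> R0 \<longleftrightarrow> u \<in> I \<and> v \<in> I \<and> S u \<inter> S v = {} \<and> anc (T u) (T v)" for u v
    unfolding R0_def by simp
  have C0: "comparability_graph I F0"
    unfolding comparability_graph_def
  proof (intro exI[of _ R0] conjI allI impI)
    show "R0 \<subseteq> I \<times> I" unfolding R0_def by blast
  next
    fix u v assume uv: "(u, v) \<in> R0"
    have uvI: "u \<in> I" "v \<in> I" "S u \<inter> S v = {}" "anc (T u) (T v)" using uv R0D by auto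
    have "u \<noteq> v"
    proof
      assume "u = v"
      then show False using uvI(3) TS[OF uvI(1)] by simp
    qed
    thus "{u, v} \<in> F0" using uvI unfolding F0_def cmp_def by blast
  next
    fix u v assume "{u, v} \<in> F0"
    then obtain i j where ij: "{u,v} = {i,j}" "i \<in> I" "j \<in> I" "S i \<inter> S j = {}" "cmp i j"
      unfolding F0_def by blast
    have "(i, j) \<in> R0 \<or> (j, i) \<in> R0"
    proof (cases "anc (T i) (T j)")
      case True thus ?thesis using ij R0D by simp
    next
      case False
      then have "anc (T j) (T i)" using ij(5) unfolding cmp_def by blast
      moreover have "S j \<inter> S i = {}" using ij(4) by blast
      ultimately show ?thesis using ij R0D by simp
    qed
    moreover have "(u = i \<and> v = j) \<or> (u = j \<and> v = i)" using ij(1) by (simp add: doubleton_eq_iff)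
    ultimately show "(u, v) \<in> R0 \<or> (v, u) \<in> R0" by blast
  next
    fix u v assume uv: "(u, v) \<in> R0"
    show "(v, u) \<notin> R0"
    proof
      assume vu: "(v, u) \<in> R0"
      have uvI: "u \<in> I" "v \<in> I" "S u \<inter> S v = {}" "anc (T u) (T v)" using uv R0D by auto
      have "anc (T v) (T u)" using vu R0D by auto
      then have "T u = T v" using anc_antisym[OF TV[OF uvI(2)] uvI(4)] by simp
      then have "T u \<in> S u \<inter> S v" using TS[OF uvI(1)] TS[OF uvI(2)] by simp
      thus False using uvI(3) by simp
    qed
  next
    show "trans R0"
    proof (rule transI)
      fix i j k assume ij: "(i, j) \<in> R0" and jk: "(j, k) \<in> R0"
      have I3: "i \<in> I" "j \<in> I" "k \<in> I" using ij jk R0D by auto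
      have a1: "anc (T i) (T j)" "anc (T j) (T k)" using ij jk R0D by auto
      have d: "S i \<inter> S j = {}" using ij R0D by auto
      have "S i \<inter> S k = {}"
      proof (rule ccontr)
        assume "S i \<inter> S k \<noteq> {}"
        then obtain x where x: "x \<in> S i" "x \<in> S k" by blast
        have "anc (T j) x" using anc_trans[OF a1(2) Tanc[OF I3(3) x(2)]] .
        then have "T j \<in> S i" using Tconv[OF I3(1) x(1) a1(1)] by blast
        thus False using d TS[OF I3(2)] by blast
      qed
      thus "(i, k) \<in> R0" using I3 anc_trans[OF a1] R0D by blast
    qed
  qed
  have R1D: "(u, v) \<in> R1 \<longleftrightarrow> u \<in> I \<and> v \<in> I \<and> \<not> cmp u v \<and> L (T u) < L (T v)" for u v
    unfolding R1_def by simp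
  have C1: "comparability_graph I F1"
    unfolding comparability_graph_def
  proof (intro exI[of _ R1] conjI allI impI)
    show "R1 \<subseteq> I \<times> I" unfolding R1_def by blast
  next
    fix u v assume uv: "(u, v) \<in> R1"
    have uvI: "u \<in> I" "v \<in> I" "\<not> cmp u v" using uv R1D by auto
    have "u \<noteq> v" using uvI(3) unfolding cmp_def by auto
    moreover have "S u \<inter> S v = {}" using incmp_disj uvI by blast
    ultimately show "{u, v} \<in> F1" using uvI unfolding F1_def by blast
  next
    fix u v assume "{u, v} \<in> F1"
    then obtain i j where ij: "{u,v} = {i,j}" "i \<in> I" "j \<in> I" "\<not> cmp i j"
      unfolding F1_def by blast
    have "T i \<noteq> T j" using ij(4) unfolding cmp_def by auto
    then have "L (T i) \<noteq> L (T j)" using L_inj TV ij by blast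
    then have "L (T i) < L (T j) \<or> L (T j) < L (T i)" by (simp add: neq_iff)
    moreover have "\<not> cmp j i" using ij(4) cmp_sym by simp
    ultimately have "(i, j) \<in> R1 \<or> (j, i) \<in> R1" using ij R1D by blast
    moreover have "(u = i \<and> v = j) \<or> (u = j \<and> v = i)" using ij(1) by (simp add: doubleton_eq_iff)
    ultimately show "(u, v) \<in> R1 \<or> (v, u) \<in> R1" by blast
  next
    fix u v assume uv: "(u, v) \<in> R1"
    thus "(v, u) \<notin> R1" using R1D by auto
  next
    show "trans R1"
    proof (rule transI)
      fix i j k assume ij: "(i, j) \<in> R1" and jk: "(j, k) \<in> R1"
      have I3: "i \<in> I" "j \<in> I" "k \<in> I" using ij jk R1D by auto
      have l: "L (T i) < L (T j)" "L (T j) < L (T k)" using ij jk R1D by auto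
      have nij: "\<not> anc (T i) (T j)" using ij R1D unfolding cmp_def by auto
      have "\<not> anc (T i) (T k)"
        using L_dfs[OF TV[OF I3(1)] TV[OF I3(2)] TV[OF I3(3)] _ l] nij by blast
      moreover have "\<not> anc (T k) (T i)"
      proof
        assume "anc (T k) (T i)"
        then have "L (T k) \<le> L (T i)" using L_le[OF TV[OF I3(1)]] by blast
        thus False using l by simp
      qed
      ultimately have "\<not> cmp i k" unfolding cmp_def by blast
      moreover have "L (T i) < L (T k)" using l by simp
      ultimately show "(i, k) \<in> R1" using I3 R1D by blast
    qed
  qed
  show ?thesis using U Dj C0 C1 unfolding D_def by blast
qed

end


lemma tree_parent:
  fixes VT :: "'a set" and ET :: "'a set set"
  assumes T: "is_tree VT ET"
  shows "\<exists>r p. rtree VT ET r p"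
proof -
  have fin: "finite VT" and ne: "VT \<noteq> {}" and sg: "simple_graph VT ET"
    and conn: "\<forall>u\<in>VT. \<forall>v\<in>VT. (\<lambda>x y. {x, y} \<in> ET)\<^sup>*\<^sup>* u v"
    and acyc: "\<not> (\<exists>cs. length cs \<ge> 3 \<and> distinct cs \<and>
            (\<forall>i<length cs. {cs ! i, cs ! ((i + 1) mod length cs)} \<in> ET))"
    using T unfolding is_tree_def by blast+
  obtain r where rV: "r \<in> VT" using ne by blast
  define R where "R = (\<lambda>x y. {x, y} \<in> ET)"
  define d where "d x = (LEAST n. (R^^n) r x)" for x
  define p where "p x = (if x = r then r else SOME u. {u, x} \<in> ET \<and> d u < d x)" for x
  have sgE: "{a, b} \<in> ET \<Longrightarrow> a \<in> VT \<and> b \<in> VT" for a b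
    using sg unfolding simple_graph_def by blast
  have pf: "{p x, x} \<in> ET \<and> d (p x) < d x" if xV: "x \<in> VT" and xr: "x \<noteq> r" for x
  proof -
    have "R\<^sup>*\<^sup>* r x" using conn rV xV unfolding R_def by blast
    then have "\<exists>n. (R^^n) r x" by (simp add: rtranclp_power)
    then have dx: "(R^^(d x)) r x" unfolding d_def by (rule LeastI_ex)
    then obtain m where m: "d x = Suc m" using xr by (cases "d x") auto
    with dx obtain u where u: "(R^^m) r u" "R u x" using relpowp_Suc_E by metis
    have "d u \<le> m" unfolding d_def using u(1) by (rule Least_le)
    then have ex: "\<exists>u. {u, x} \<in> ET \<and> d u < d x" using u(2) m unfolding R_def by auto
    show ?thesis using someI_ex[OF ex] xr unfolding p_def by simp
  qed
  have pV: "p x \<in> VT" if "x \<in> VT" for x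
  proof (cases "x = r")
    case True thus ?thesis using rV unfolding p_def by simp
  next
    case False thus ?thesis using pf[OF that False] sgE by blast
  qed
  have pE: "{x, p x} \<in> ET" if "x \<in> VT" "x \<noteq> r" for x
    using pf[OF that] by (simp add: insert_commute)
  have reach: "\<forall>x. d x = k \<longrightarrow> x \<in> VT \<longrightarrow> (\<exists>n. (p^^n) x = r)" for k
  proof (induction k rule: less_induct)
    case (less k)
    show ?case
    proof (intro allI impI)
      fix x assume dx: "d x = k" and xV: "x \<in> VT"
      show "\<exists>n. (p^^n) x = r"
      proof (cases "x = r")
        case True thus ?thesis by (intro exI[of _ 0]) simp
      next
        case False
        have "d (p x) < k" using pf[OF xV False] dx by simp
        then obtain n where "(p^^n) (p x) = r" using less pV[OF xV] by blast
        then have "(p^^(Suc n)) x = r" by (simp add: funpow_swap1)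
        thus ?thesis by blast
      qed
    qed
  qed
  have "rtree VT ET r p"
  proof
    show "simple_graph VT ET" by (rule sg)
    show "\<not> (\<exists>cs. length cs \<ge> 3 \<and> distinct cs \<and>
            (\<forall>i<length cs. {cs ! i, cs ! ((i + 1) mod length cs)} \<in> ET))" by (rule acyc)
    show "r \<in> VT" by (rule rV)
    show "p r = r" unfolding p_def by simp
    show "\<And>x. x \<in> VT \<Longrightarrow> p x \<in> VT" by (rule pV)
    show "\<And>x. x \<in> VT \<Longrightarrow> x \<noteq> r \<Longrightarrow> {x, p x} \<in> ET" by (rule pE)
    show "\<And>x. x \<in> VT \<Longrightarrow> \<exists>n. (p^^n) x = r" using reach by blast
  qed
  thus ?thesis by blast
qed

theorem theorem6:
  fixes VT :: "'a set" and ET :: "'a set set"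
    and I :: "'i set" and S :: "'i \<Rightarrow> 'a set"
  assumes "is_tree VT ET"
    and "finite I"
    and "\<forall>i\<in>I. is_subtree VT ET (S i)"
  shows "comp_cover_number I (disjointness_edges I S)
           \<le> comp_partition_number I (disjointness_edges I S)
         \<and> comp_partition_number I (disjointness_edges I S) \<le> 2"
proof -
  obtain r p where rt: "rtree VT ET r p" using tree_parent[OF assms(1)] by blast
  have "finite VT" using assms(1) unfolding is_tree_def by (rule conjunct1)
  from finite_imp_inj_to_nat_seg[OF this] obtain f :: "'a \<Rightarrow> nat" and n
    where "f ` VT = {i. i < n}" and fi: "inj_on f VT" by blast
  interpret rtree_f VT ET r p f
    by (rule rtree_f.intro[OF rt rtree_f_axioms.intro[OF fi]])
  define D where "D = disjointness_edges I S"
  obtain F0 F1 where F: "F0 \<subseteq> D" "F1 \<subseteq> D" "comparability_graph I F0" "comparability_graph I F1"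
     "F0 \<union> F1 = D" "F0 \<inter> F1 = {}"
    using main[OF assms(3)] unfolding D_def[symmetric] by (elim exE conjE) (rule that; assumption)
  define F where "F = (\<lambda>k::nat. if k = 0 then F0 else F1)"
  have two: "{..<(2::nat)} = {0, 1}" by auto
  have Q2: "(\<forall>i<2. F i \<subseteq> D \<and> comparability_graph I (F i)) \<and> (\<Union>i<2. F i) = D \<and>
     (\<forall>i<2. \<forall>j<2. i \<noteq> j \<longrightarrow> F i \<inter> F j = {})"
  proof (intro conjI allI impI)
    fix i :: nat assume "i < 2"
    have "F i = F0 \<or> F i = F1" unfolding F_def by (cases "i = 0") simp_all
    thus "F i \<subseteq> D" using F(1,2) by blast
    from \<open>F i = F0 \<or> F i = F1\<close> show "comparability_graph I (F i)" using F(3,4) by (elim disjE) simp_all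
  next
    have "(\<Union>i<2. F i) = F 0 \<union> F 1" unfolding two by simp
    also have "\<dots> = D" unfolding F_def using F(5) by simp
    finally show "(\<Union>i<2. F i) = D" .
  next
    fix i j :: nat assume "i < 2" "j < 2" "i \<noteq> j"
    then have "(i = 0 \<and> j = 1) \<or> (i = 1 \<and> j = 0)" by linarith
    then have "(F i = F0 \<and> F j = F1) \<or> (F i = F1 \<and> F j = F0)" unfolding F_def by auto
    thus "F i \<inter> F j = {}" using F(6) by blast
  qed
  let ?Q = "\<lambda>m. \<exists>F :: nat \<Rightarrow> 'i set set.
     (\<forall>i<m. F i \<subseteq> D \<and> comparability_graph I (F i)) \<and> (\<Union>i<m. F i) = D \<and>
     (\<forall>i<m. \<forall>j<m. i \<noteq> j \<longrightarrow> F i \<inter> F j = {})"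
  have q2: "?Q 2" by (rule exI[of _ F], rule Q2)
  have pn: "comp_partition_number I D = (LEAST m. ?Q m)" unfolding comp_partition_number_def ..
  have le2: "comp_partition_number I D \<le> 2" unfolding pn using q2 by (rule Least_le)
  have "?Q (comp_partition_number I D)" unfolding pn using q2 by (rule LeastI)
  then obtain G :: "nat \<Rightarrow> 'i set set" where
    G: "(\<forall>i<comp_partition_number I D. G i \<subseteq> D \<and> comparability_graph I (G i))"
       "(\<Union>i<comp_partition_number I D. G i) = D" by (elim exE conjE) (rule that; assumption)
  then have "\<exists>F :: nat \<Rightarrow> 'i set set.
     (\<forall>i<comp_partition_number I D. F i \<subseteq> D \<and> comparability_graph I (F i)) \<and>
     (\<Union>i<comp_partition_number I D. F i) = D" by (intro exI[of _ G] conjI)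
  then have "comp_cover_number I D \<le> comp_partition_number I D"
    unfolding comp_cover_number_def by (rule Least_le)
  thus ?thesis using le2 unfolding D_def by simp
qed

end
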